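(* Let $f(w)=\frac12 w^TAw-b^Tw+c$ with $A\in\mathbb{R}^{n\times n}$ symmetric positive definite, $b\in\mathbb{R}^n$, $c\in\mathbb{R}$. Let $x^k\in\mathbb{R}^n$ with $\nabla f(x^k)\ne 0$, let $t_k=\frac{2\|\nabla f(x^k)\|^2}{\nabla f(x^k)^TA\nabla f(x^k)}$ and $y^k=x^k-t_k\nabla f(x^k)$, and assume $\nabla f(x^k)$ and $\nabla f(y^k)$ are linearly independent. Let $g_x=\nabla f(x^k)$, $g_y=\nabla f(y^k)$, and define $$\Delta_k=\langle g_y,Ag_y\rangle\langle g_x,Ag_x\rangle-\langle g_x,Ag_y\rangle^2,$$ $$\alpha_k=\frac{\langle g_y,g_x\rangle\langle g_x,Ag_y\rangle-\langle g_x,g_x\rangle\langle g_y,Ag_y\rangle}{\Delta_k},\qquad \beta_k=\frac{-\langle g_y,g_x\rangle\langle g_x,Ag_x\rangle+\langle g_x,g_x\rangle\langle g_y,Ag_x\rangle}{\Delta_k},$$ and $x^{k+1}=x^k+\alpha_kg_x+\beta_kg_y$. Let $\Pi_k=\{x^k+\alpha g_x+\beta g_y:\alpha,\beta\in\mathbb{R}\}$ and $L_k=\{x\in\mathbb{R}^n: f(x)=f(x^k)\}$, and $E_k=\Pi_k\cap L_k$. Then: $\Delta_k>0$; $E_k$ is an ellipse contained in the two-dimensional affine plane $\Pi_k$ which contains $x^k$ and $y^k$, with $E_k$ orthogonal to $g_x$ at $x^k$ (i.e., $g_x$ is orthogonal to the tangent line of $E_k$ at $x^k$) and orthogonal to $g_y$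 at $y^k$; and $x^{k+1}$ is both the unique minimizer of $f$ on $\Pi_k$ and the center of the ellipse $E_k$.
   Context: $\langle u,v\rangle=u^Tv$, $\|\cdot\|$ the Euclidean norm, $\nabla f(w)=Aw-b$. *)

theory Defs
  imports "HOL-Analysis.Analysis"
begin

definition quad_f :: "real^'n^'n \<Rightarrow> real^'n \<Rightarrow> real \<Rightarrow> real^'n \<Rightarrow> real" where
  "quad_f A b c w = (1/2) * (w \<bullet> (A *v w)) - b \<bullet> w + c"

definition quad_grad :: "real^'n^'n \<Rightarrow> real^'n \<Rightarrow> real^'n \<Rightarrow> real^'n" where
  "quad_grad A b w = A *v w - b"

definition pos_def :: "real^'n^'n \<Rightarrow> bool" where
  "pos_def A \<longleftrightarrow> transpose A = A \<and> (\<forall>x. x \<noteq> 0 \<longrightarrow> x \<bullet> (A *v x) > 0)"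

text \<open>E is a (non-degenerate) ellipse in R^n with centre z: the image of the unit circle
  under an injective affine map of R^2, i.e. z + cos t e1 + sin t e2 with e1, e2 linearly independent.\<close>
definition ellipse_with_center :: "(real^'n) set \<Rightarrow> real^'n \<Rightarrow> bool" where
  "ellipse_with_center E z \<longleftrightarrow>
     (\<exists>e1 e2. (\<forall>a b. a *\<^sub>R e1 + b *\<^sub>R e2 = 0 \<longrightarrow> a = 0 \<and> b = 0) \<and>
              E = range (\<lambda>t. z + cos t *\<^sub>R e1 + sin t *\<^sub>R e2))"

definition is_ellipse :: "(real^'n) set \<Rightarrow> bool" where
  "is_ellipse E \<longleftrightarrow> (\<exists>z. ellipse_with_center E z)"

definition tangent_vec :: "(real^'n) set \<Rightarrow> real^'n \<Rightarrow> real^'n \<Rightarrow> bool" where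
  "tangent_vec E p v \<longleftrightarrow>
     (\<exists>\<gamma>::real \<Rightarrow> real^'n. \<gamma> 0 = p \<and> (\<forall>t. \<gamma> t \<in> E) \<and> (\<gamma> has_vector_derivative v) (at 0))"

definition orthogonal_at :: "(real^'n) set \<Rightarrow> real^'n \<Rightarrow> real^'n \<Rightarrow> bool" where
  "orthogonal_at E p g \<longleftrightarrow> p \<in> E \<and> (\<exists>v. v \<noteq> 0 \<and> tangent_vec E p v) \<and>
     (\<forall>v. tangent_vec E p v \<longrightarrow> g \<bullet> v = 0)"

end

theory Submission
  imports Defs
begin
lemma symA: fixes A :: "real^'n^'n" assumes "transpose A = A" shows "x \<bullet> (A *v y) = y \<bullet> (A *v x)"
  by (metis assms dot_lmul_matrix inner_commute transpose_matrix_vector)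
lemma quad_expand:
  fixes A :: "real^'n^'n" assumes "transpose A = A"
  shows "quad_f A b c (x + v) = quad_f A b c x + quad_grad A b x \<bullet> v + 1/2 * (v \<bullet> (A *v v))"
  using symA[OF assms, of x v]
  by (simp add: quad_f_def quad_grad_def matrix_vector_right_distrib inner_add_left inner_add_right inner_diff_left algebra_simps inner_commute)

lemma tangent_orth:
  fixes A :: "real^'n^'n" assumes "transpose A = A" and "\<forall>x\<in>E. quad_f A b c x = K"
   and "tangent_vec E p v"
  shows "quad_grad A b p \<bullet> v = 0"
proof -
  obtain \<gamma> where g: "\<gamma> 0 = p" "\<forall>t. \<gamma> t \<in> E" "(\<gamma> has_vector_derivative v) (at 0)"
    using assms(3) unfolding tangent_vec_def by blast
  have gd: "(\<gamma> has_derivative (\<lambda>t. t *\<^sub>R v)) (at 0)"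
    using g(3) unfolding has_vector_derivative_def .
  have Ad: "((\<lambda>t. A *v \<gamma> t) has_derivative (\<lambda>t. A *v (t *\<^sub>R v))) (at 0)"
    using bounded_linear.has_derivative[OF matrix_vector_mul_bounded_linear gd] .
  have d: "((\<lambda>t. quad_f A b c (\<gamma> t)) has_real_derivative quad_grad A b p \<bullet> v) (at 0)"
    unfolding quad_f_def has_field_derivative_def
    apply (rule has_derivative_eq_rhs)
     apply (rule derivative_eq_intros Ad gd | simp)+
    using symA[OF assms(1), of p v] g(1)
    by (auto simp: quad_grad_def matrix_vector_mult_scaleR inner_diff_left algebra_simps fun_eq_iff inner_commute)
  have c: "((\<lambda>t. quad_f A b c (\<gamma> t)) has_real_derivative 0) (at 0)"
    using g(2) assms(2) by (simp add: has_real_derivative_iff_has_vector_derivative)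
  show ?thesis using DERIV_unique[OF d c] .
qed

lemma ellipse_tangent:
  assumes "ellipse_with_center E z" "p \<in> E"
  shows "\<exists>v. v \<noteq> 0 \<and> tangent_vec E p v"
proof -
  obtain e1 e2 where e: "\<forall>a b. a *\<^sub>R e1 + b *\<^sub>R e2 = 0 \<longrightarrow> a = 0 \<and> b = 0"
    "E = range (\<lambda>t. z + cos t *\<^sub>R e1 + sin t *\<^sub>R e2)"
    using assms(1) unfolding ellipse_with_center_def by blast
  obtain t0 where t0: "p = z + cos t0 *\<^sub>R e1 + sin t0 *\<^sub>R e2" using assms(2) e(2) by blast
  define \<gamma> where "\<gamma> = (\<lambda>t. z + cos (t + t0) *\<^sub>R e1 + sin (t + t0) *\<^sub>R e2)"
  define v where "v = (- sin t0) *\<^sub>R e1 + cos t0 *\<^sub>R e2"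
  have "(\<gamma> has_vector_derivative v) (at 0)"
    unfolding \<gamma>_def v_def
    apply (rule has_vector_derivative_eq_rhs)
     apply (rule derivative_eq_intros refl | simp)+
    done
  moreover have "\<gamma> 0 = p" using t0 by (simp add: \<gamma>_def)
  moreover have "\<forall>t. \<gamma> t \<in> E" using e(2) by (auto simp: \<gamma>_def)
  moreover have "v \<noteq> 0"
  proof
    assume "v = 0"
    then have "- sin t0 = 0 \<and> cos t0 = 0" using e(1) v_def by metis
    then show False using sin_cos_squared_add[of t0] by simp
  qed
  ultimately show ?thesis unfolding tangent_vec_def by blast
qed

lemma quadform2:
  fixes A :: "real^'n^'n" assumes "transpose A = A"
  shows "(x *\<^sub>R e1 + y *\<^sub>R e2) \<bullet> (A *v (x *\<^sub>R e1 + y *\<^sub>R e2))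
     = x^2 * (e1 \<bullet> (A *v e1)) + 2 * x * y * (e1 \<bullet> (A *v e2)) + y^2 * (e2 \<bullet> (A *v e2))"
  using symA[OF assms, of e1 e2]
  by (simp add: matrix_vector_right_distrib matrix_vector_mult_scaleR inner_add_left inner_add_right algebra_simps power2_eq_square)

lemma ellipse_form:
  fixes A :: "real^'n^'n" and g h :: "real^'n"
  assumes pd: "pos_def A"
    and li: "\<forall>a1 a2. a1 *\<^sub>R g + a2 *\<^sub>R h = 0 \<longrightarrow> a1 = 0 \<and> a2 = 0"
    and r: "r > 0"
  shows "\<exists>e1 e2. (\<forall>a b. a *\<^sub>R e1 + b *\<^sub>R e2 = 0 \<longrightarrow> a = 0 \<and> b = 0) \<and>
     {v. (\<exists>p q. v = p *\<^sub>R g + q *\<^sub>R h) \<and> v \<bullet> (A *v v) = 2 * r}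
       = range (\<lambda>t. cos t *\<^sub>R e1 + sin t *\<^sub>R e2)"
proof -
  have sym: "transpose A = A" and pos: "\<And>x. x \<noteq> 0 \<Longrightarrow> x \<bullet> (A *v x) > 0"
    using pd unfolding pos_def_def by auto
  define G11 where "G11 = g \<bullet> (A *v g)"
  define G12 where "G12 = g \<bullet> (A *v h)"
  have gnz: "g \<noteq> 0" using li[rule_format, of 1 0] by auto
  have G11: "G11 > 0" using pos[OF gnz] by (simp add: G11_def)
  define k where "k = G12 / G11"
  define e2' where "e2' = h - k *\<^sub>R g"
  have "e2' \<noteq> 0"
  proof
    assume "e2' = 0"
    then have "(- k) *\<^sub>R g + 1 *\<^sub>R h = 0" by (simp add: e2'_def)
    then show False using li[rule_format, of "-k" 1] by simp
  qed
  define m where "m = e2' \<bullet> (A *v e2')"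
  have m: "m > 0" using pos[OF \<open>e2' \<noteq> 0\<close>] by (simp add: m_def)
  have ge2: "g \<bullet> (A *v e2') = 0"
    using G11 by (simp add: e2'_def k_def G11_def G12_def matrix_vector_mult_diff_distrib
        matrix_vector_mult_scaleR inner_diff_right)
  define c1 where "c1 = sqrt (2 * r / G11)"
  define c2 where "c2 = sqrt (2 * r / m)"
  have c1: "c1 > 0" "c1^2 = 2 * r / G11" using r G11 by (auto simp: c1_def)
  have c2: "c2 > 0" "c2^2 = 2 * r / m" using r m by (auto simp: c2_def)
  define e1 where "e1 = c1 *\<^sub>R g"
  define e2 where "e2 = c2 *\<^sub>R e2'"
  have e11: "e1 \<bullet> (A *v e1) = 2 * r"
  proof -
    have "c1 * c1 * G11 = 2 * r" using c1 G11 by (simp add: power2_eq_square)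
    then show ?thesis by (simp add: e1_def matrix_vector_mult_scaleR G11_def[symmetric] mult.assoc)
  qed
  have e22: "e2 \<bullet> (A *v e2) = 2 * r"
  proof -
    have "c2 * c2 * m = 2 * r" using c2 m by (simp add: power2_eq_square)
    then show ?thesis by (simp add: e2_def matrix_vector_mult_scaleR m_def[symmetric] mult.assoc)
  qed
  have e12: "e1 \<bullet> (A *v e2) = 0"
    by (simp add: e1_def e2_def matrix_vector_mult_scaleR ge2)
  have form: "(x *\<^sub>R e1 + y *\<^sub>R e2) \<bullet> (A *v (x *\<^sub>R e1 + y *\<^sub>R e2)) = 2 * r * (x^2 + y^2)" for x y
    using quadform2[OF sym, of x e1 y e2] e11 e22 e12 by (simp add: algebra_simps)
  have comb: "x *\<^sub>R e1 + y *\<^sub>R e2 = (x * c1 - y * c2 * k) *\<^sub>R g + (y * c2) *\<^sub>R h" for x y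
    by (simp add: e1_def e2_def e2'_def algebra_simps)
  have ind: "\<forall>a b. a *\<^sub>R e1 + b *\<^sub>R e2 = 0 \<longrightarrow> a = 0 \<and> b = 0"
  proof (intro allI impI)
    fix a b assume "a *\<^sub>R e1 + b *\<^sub>R e2 = 0"
    then have "(a * c1 - b * c2 * k) = 0 \<and> b * c2 = 0" using li[rule_format, of "a*c1 - b*c2*k" "b*c2"] comb[of a b] by simp
    then show "a = 0 \<and> b = 0" using c1 c2 by auto
  qed
  have "{v. (\<exists>p q. v = p *\<^sub>R g + q *\<^sub>R h) \<and> v \<bullet> (A *v v) = 2 * r}
       = range (\<lambda>t. cos t *\<^sub>R e1 + sin t *\<^sub>R e2)"
  proof (intro set_eqI iffI)
    fix v assume "v \<in> range (\<lambda>t. cos t *\<^sub>R e1 + sin t *\<^sub>R e2)"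
    then obtain t where t: "v = cos t *\<^sub>R e1 + sin t *\<^sub>R e2" by blast
    show "v \<in> {v. (\<exists>p q. v = p *\<^sub>R g + q *\<^sub>R h) \<and> v \<bullet> (A *v v) = 2 * r}"
      using comb[of "cos t" "sin t"] form[of "cos t" "sin t"] t by auto
  next
    fix v assume "v \<in> {v. (\<exists>p q. v = p *\<^sub>R g + q *\<^sub>R h) \<and> v \<bullet> (A *v v) = 2 * r}"
    then obtain p q where v: "v = p *\<^sub>R g + q *\<^sub>R h" and f: "v \<bullet> (A *v v) = 2 * r" by blast
    define x where "x = (p + q * k) / c1"
    define y where "y = q / c2"
    have vxy: "v = x *\<^sub>R e1 + y *\<^sub>R e2"
    proof -
      have "x * c1 - y * c2 * k = p" "y * c2 = q" using c1 c2 by (auto simp: x_def y_def field_simps)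
      then show ?thesis unfolding comb v by simp
    qed
    then have "2 * r * (x^2 + y^2) = 2 * r" using form f by metis
    then have "x^2 + y^2 = 1" using r by simp
    then obtain t where "x = cos t" "y = sin t" using sincos_total_2pi by metis
    then show "v \<in> range (\<lambda>t. cos t *\<^sub>R e1 + sin t *\<^sub>R e2)" using vxy by blast
  qed
  then show ?thesis using ind by blast
qed

lemma aff_dim_plane:
  fixes x g h :: "real^'n"
  assumes li: "\<forall>a1 a2. a1 *\<^sub>R g + a2 *\<^sub>R h = 0 \<longrightarrow> a1 = 0 \<and> a2 = 0"
  shows "aff_dim {x + a *\<^sub>R g + b' *\<^sub>R h | a b'. True} = 2"
proof -
  have sp: "span {g, h} = {a *\<^sub>R g + b' *\<^sub>R h | a b'. True}"
    by (auto simp: span_insert span_singleton algebra_simps)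
  have eq: "{x + a *\<^sub>R g + b' *\<^sub>R h | a b'. True} = (+) x ` span {g, h}"
    unfolding sp by (auto simp: add.assoc)
  have hnz: "h \<noteq> 0" using li[rule_format, of 0 1] by auto
  have gh: "g \<noteq> h" using li[rule_format, of 1 "-1"] by auto
  have "g \<notin> span {h}"
  proof
    assume "g \<in> span {h}"
    then obtain k where "g = k *\<^sub>R h" by (auto simp: span_singleton)
    then show False using li[rule_format, of 1 "-k"] by auto
  qed
  then have ind: "independent {g, h}" using hnz
    by (simp add: independent_insert)
  have "dim (span {g, h}) = 2"
    using dim_eq_card_independent[OF ind] gh by simp
  then show ?thesis unfolding eq aff_dim_translation_eq
    by (simp add: aff_dim_subspace)
qed

theorem mainTheorem2:
  fixes A :: "real^'n^'n" and b xk yk gx gy xk1 :: "real^'n" and c tk Dk \<alpha> \<beta> :: real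
    and P L E :: "(real^'n) set"
  assumes A_pd: "pos_def A"
    and gx_def: "gx = quad_grad A b xk"
    and gx_nz: "gx \<noteq> 0"
    and tk_def: "tk = 2 * (norm gx)^2 / (gx \<bullet> (A *v gx))"
    and yk_def: "yk = xk - tk *\<^sub>R gx"
    and gy_def: "gy = quad_grad A b yk"
    and lin_indep: "\<forall>a1 a2. a1 *\<^sub>R gx + a2 *\<^sub>R gy = 0 \<longrightarrow> a1 = 0 \<and> a2 = 0"
    and Delta_def: "Dk = (gy \<bullet> (A *v gy)) * (gx \<bullet> (A *v gx)) - (gx \<bullet> (A *v gy))^2"
    and alpha_def: "\<alpha> = ((gy \<bullet> gx) * (gx \<bullet> (A *v gy)) - (gx \<bullet> gx) * (gy \<bullet> (A *v gy))) / Dk"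
    and beta_def: "\<beta> = (- (gy \<bullet> gx) * (gx \<bullet> (A *v gx)) + (gx \<bullet> gx) * (gy \<bullet> (A *v gx))) / Dk"
    and xk1_def: "xk1 = xk + \<alpha> *\<^sub>R gx + \<beta> *\<^sub>R gy"
    and Pi_def: "P = {xk + a *\<^sub>R gx + b' *\<^sub>R gy | a b'. True}"
    and L_def: "L = {x. quad_f A b c x = quad_f A b c xk}"
    and E_def: "E = P \<inter> L"
  shows "Dk > 0
    \<and> is_ellipse E \<and> E \<subseteq> P \<and> aff_dim P = 2 \<and> xk \<in> P \<and> yk \<in> P
    \<and> orthogonal_at E xk gx \<and> orthogonal_at E yk gy
    \<and> xk1 \<in> P \<and> (\<forall>x\<in>P. x \<noteq> xk1 \<longrightarrow> quad_f A b c xk1 < quad_f A b c x)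
    \<and> ellipse_with_center E xk1"
proof -
  have sym: "transpose A = A" and pos: "\<And>x. x \<noteq> 0 \<Longrightarrow> x \<bullet> (A *v x) > 0"
    using A_pd unfolding pos_def_def by auto
  define gg where "gg = gx \<bullet> gx"
  define gh where "gh = gy \<bullet> gx"
  define G11 where "G11 = gx \<bullet> (A *v gx)"
  define G12 where "G12 = gx \<bullet> (A *v gy)"
  define G22 where "G22 = gy \<bullet> (A *v gy)"
  have G21: "gy \<bullet> (A *v gx) = G12" using symA[OF sym, of gy gx] by (simp add: G12_def)
  have gg: "gg > 0" using gx_nz by (simp add: gg_def)
  have G11: "G11 > 0" using pos[OF gx_nz] by (simp add: G11_def)
  have Dk: "Dk = G22 * G11 - G12^2" using Delta_def by (simp add: G11_def G12_def G22_def)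
  have al: "\<alpha> = (gh * G12 - gg * G22) / Dk" using alpha_def by (simp add: gg_def gh_def G12_def G22_def)
  have be: "\<beta> = (- gh * G11 + gg * G12) / Dk" using beta_def G21 by (simp add: gg_def gh_def G11_def)
  have Dpos: "Dk > 0"
  proof -
    define s where "s = - G12 / G11"
    have "s *\<^sub>R gx + 1 *\<^sub>R gy \<noteq> 0" using lin_indep[rule_format, of s 1] by auto
    then have "(s *\<^sub>R gx + 1 *\<^sub>R gy) \<bullet> (A *v (s *\<^sub>R gx + 1 *\<^sub>R gy)) > 0" by (rule pos)
    then have "s^2 * G11 + 2 * s * G12 + G22 > 0"
      using quadform2[OF sym, of s gx 1 gy] by (simp add: G11_def G12_def G22_def)
    then have "G11 * (s^2 * G11 + 2 * s * G12 + G22) > 0" using G11 by simp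
    moreover have "G11 * (s^2 * G11 + 2 * s * G12 + G22) = Dk"
      using G11 unfolding Dk s_def by (simp add: field_simps power2_eq_square)
    ultimately show ?thesis by simp
  qed
  have grad_tr: "quad_grad A b (x + v) = quad_grad A b x + A *v v" for x v
    by (simp add: quad_grad_def matrix_vector_right_distrib)
  define gr where "gr = quad_grad A b xk1"
  have gr: "gr = gx + \<alpha> *\<^sub>R (A *v gx) + \<beta> *\<^sub>R (A *v gy)"
    unfolding gr_def xk1_def add.assoc grad_tr gx_def
    by (simp add: matrix_vector_right_distrib matrix_vector_mult_scaleR)
  have o1: "gr \<bullet> gx = 0"
  proof -
    have "gr \<bullet> gx = gx \<bullet> gr" by (rule inner_commute)
    also have "\<dots> = gg + \<alpha> * G11 + \<beta> * G12"
      unfolding gr by (simp add: inner_add_right gg_def G11_def G12_def)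
    also have "\<dots> = (gg * Dk + (gh * G12 - gg * G22) * G11 + (- gh * G11 + gg * G12) * G12) / Dk"
      unfolding al be using Dpos by (simp add: field_simps)
    also have "\<dots> = 0" unfolding Dk by (simp add: power2_eq_square algebra_simps)
    finally show ?thesis .
  qed
  have o2: "gr \<bullet> gy = 0"
  proof -
    have "gr \<bullet> gy = gy \<bullet> gr" by (rule inner_commute)
    also have "\<dots> = gh + \<alpha> * G12 + \<beta> * G22"
      unfolding gr using G21 by (simp add: inner_add_right gh_def G22_def)
    also have "\<dots> = (gh * Dk + (gh * G12 - gg * G22) * G12 + (- gh * G11 + gg * G12) * G22) / Dk"
      unfolding al be using Dpos by (simp add: field_simps)
    also have "\<dots> = 0" unfolding Dk by (simp add: power2_eq_square algebra_simps)
    finally show ?thesis .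
  qed
  have fx1: "quad_f A b c (xk1 + (p *\<^sub>R gx + q *\<^sub>R gy)) = quad_f A b c xk1
      + 1/2 * ((p *\<^sub>R gx + q *\<^sub>R gy) \<bullet> (A *v (p *\<^sub>R gx + q *\<^sub>R gy)))" for p q
    using quad_expand[OF sym, of b c xk1 "p *\<^sub>R gx + q *\<^sub>R gy"] o1 o2
    by (simp add: gr_def[symmetric] inner_add_right)
  have Pchar: "x \<in> P \<longleftrightarrow> (\<exists>p q. x = xk1 + (p *\<^sub>R gx + q *\<^sub>R gy))" for x
  proof
    assume "x \<in> P"
    then obtain a b' where "x = xk + a *\<^sub>R gx + b' *\<^sub>R gy" using Pi_def by blast
    then have "x = xk1 + ((a - \<alpha>) *\<^sub>R gx + (b' - \<beta>) *\<^sub>R gy)"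
      by (simp add: xk1_def algebra_simps)
    then show "\<exists>p q. x = xk1 + (p *\<^sub>R gx + q *\<^sub>R gy)" by blast
  next
    assume "\<exists>p q. x = xk1 + (p *\<^sub>R gx + q *\<^sub>R gy)"
    then obtain p q where "x = xk1 + (p *\<^sub>R gx + q *\<^sub>R gy)" by blast
    then have "x = xk + (p + \<alpha>) *\<^sub>R gx + (q + \<beta>) *\<^sub>R gy"
      by (simp add: xk1_def algebra_simps)
    then show "x \<in> P" using Pi_def by blast
  qed
  have xk1P: "xk1 \<in> P" using Pi_def xk1_def by blast
  have xkP: "xk \<in> P" using Pi_def by (auto intro!: exI[of _ 0])
  have ykP: "yk \<in> P"
  proof -
    have "yk = xk + (- tk) *\<^sub>R gx + 0 *\<^sub>R gy" using yk_def by simp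
    then show ?thesis using Pi_def by blast
  qed
  have minim: "\<forall>x\<in>P. x \<noteq> xk1 \<longrightarrow> quad_f A b c xk1 < quad_f A b c x"
  proof (intro ballI impI)
    fix x assume "x \<in> P" "x \<noteq> xk1"
    then obtain p q where x: "x = xk1 + (p *\<^sub>R gx + q *\<^sub>R gy)" using Pchar by blast
    then have "p *\<^sub>R gx + q *\<^sub>R gy \<noteq> 0" using \<open>x \<noteq> xk1\<close> by auto
    then have "(p *\<^sub>R gx + q *\<^sub>R gy) \<bullet> (A *v (p *\<^sub>R gx + q *\<^sub>R gy)) > 0" by (rule pos)
    then show "quad_f A b c xk1 < quad_f A b c x" unfolding x fx1 by simp
  qed
  have xne: "xk \<noteq> xk1"
  proof
    assume "xk = xk1"
    then have "gr = gx" using gr_def gx_def by simp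
    then show False using o1 gg by (simp add: gg_def)
  qed
  define r where "r = quad_f A b c xk - quad_f A b c xk1"
  have r: "r > 0" using minim xkP xne by (simp add: r_def)
  have fyk: "quad_f A b c yk = quad_f A b c xk"
  proof -
    have "quad_f A b c yk = quad_f A b c xk + gx \<bullet> ((- tk) *\<^sub>R gx) + 1/2 * (((- tk) *\<^sub>R gx) \<bullet> (A *v ((- tk) *\<^sub>R gx)))"
      using quad_expand[OF sym, of b c xk "(- tk) *\<^sub>R gx"] yk_def gx_def by simp
    also have "\<dots> = quad_f A b c xk + tk * (tk * G11 / 2 - gg)"
      using matrix_vector_mult_scaleR[of A "- tk" gx]
      by (simp del: scaleR_minus_left add: matrix_vector_mult_scaleR G11_def gg_def algebra_simps)
    also have "tk * G11 / 2 - gg = 0" using tk_def G11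
      by (simp add: G11_def gg_def power2_norm_eq_inner)
    finally show ?thesis by simp
  qed
  have Eeq: "E = (+) xk1 ` {v. (\<exists>p q. v = p *\<^sub>R gx + q *\<^sub>R gy) \<and> v \<bullet> (A *v v) = 2 * r}"
  proof (intro set_eqI iffI)
    fix x assume "x \<in> E"
    then have "x \<in> P" "quad_f A b c x = quad_f A b c xk" using E_def L_def by auto
    then obtain p q where x: "x = xk1 + (p *\<^sub>R gx + q *\<^sub>R gy)" using Pchar by blast
    have "(p *\<^sub>R gx + q *\<^sub>R gy) \<bullet> (A *v (p *\<^sub>R gx + q *\<^sub>R gy)) = 2 * r"
      using \<open>quad_f A b c x = _\<close> unfolding x fx1 r_def by simp
    then show "x \<in> (+) xk1 ` {v. (\<exists>p q. v = p *\<^sub>R gx + q *\<^sub>R gy) \<and> v \<bullet> (A *v v) = 2 * r}"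
      using x by blast
  next
    fix x assume "x \<in> (+) xk1 ` {v. (\<exists>p q. v = p *\<^sub>R gx + q *\<^sub>R gy) \<and> v \<bullet> (A *v v) = 2 * r}"
    then obtain p q where x: "x = xk1 + (p *\<^sub>R gx + q *\<^sub>R gy)"
      and f: "(p *\<^sub>R gx + q *\<^sub>R gy) \<bullet> (A *v (p *\<^sub>R gx + q *\<^sub>R gy)) = 2 * r" by blast
    have "x \<in> P" using Pchar x by blast
    moreover have "quad_f A b c x = quad_f A b c xk" unfolding x fx1 f r_def by (simp add: field_simps)
    ultimately show "x \<in> E" using E_def L_def by auto
  qed
  obtain e1 e2 where e: "\<forall>a b. a *\<^sub>R e1 + b *\<^sub>R e2 = 0 \<longrightarrow> a = 0 \<and> b = 0"
    "{v. (\<exists>p q. v = p *\<^sub>R gx + q *\<^sub>R gy) \<and> v \<bullet> (A *v v) = 2 * r}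
       = range (\<lambda>t. cos t *\<^sub>R e1 + sin t *\<^sub>R e2)"
    using ellipse_form[OF A_pd lin_indep r] by blast
  have ell: "ellipse_with_center E xk1"
    unfolding ellipse_with_center_def
  proof (intro exI conjI)
    show "\<forall>a b. a *\<^sub>R e1 + b *\<^sub>R e2 = 0 \<longrightarrow> a = 0 \<and> b = 0" by (rule e(1))
    show "E = range (\<lambda>t. xk1 + cos t *\<^sub>R e1 + sin t *\<^sub>R e2)"
      unfolding Eeq e(2) by (auto simp: add.assoc)
  qed
  have EL: "\<forall>x\<in>E. quad_f A b c x = quad_f A b c xk" using E_def L_def by auto
  have xkE: "xk \<in> E" using xkP E_def L_def by auto
  have ykE: "yk \<in> E" using ykP fyk E_def L_def by auto
  have ox: "orthogonal_at E xk gx"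
    unfolding orthogonal_at_def
    using xkE ellipse_tangent[OF ell xkE] tangent_orth[OF sym EL] gx_def by blast
  have oy: "orthogonal_at E yk gy"
    unfolding orthogonal_at_def
    using ykE ellipse_tangent[OF ell ykE] tangent_orth[OF sym EL] gy_def by blast
  have "is_ellipse E" using ell unfolding is_ellipse_def by blast
  moreover have "E \<subseteq> P" using E_def by auto
  moreover have "aff_dim P = 2" unfolding Pi_def by (rule aff_dim_plane[OF lin_indep])
  ultimately show ?thesis using Dpos xkP ykP ox oy xk1P minim ell by blast
qed

end
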